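(* Let $\omega>0$, $\mu>0$ and $l=B/\omega\in\mathbb Z$. Then the Stokes multipliers $c_0$ and $c_1$ of the linear system (L) are real.
   Context: Let $\omega>0$, $l\in\mathbb R$, $\mu>0$. System (L) on the Riemann sphere is: $u'=z^{-2}\big(-(lz+\mu(1+z^2))u+\frac{z}{2i\omega}v\big)$, $v'=\frac{1}{2i\omega z}u$, with $w=(u,v)$. It has irregular singular points at $0$ and $\infty$, and at $0$ it is formally equivalent to the diagonal system $\tilde u'=-z^{-2}(lz+\mu(1+z^2))\tilde u$, $\tilde v'=0$, with fundamental matrix $F(z)=\operatorname{diag}(z^{-l}e^{\mu(1/z-z)},1)$. Let $S_+$ (resp. $S_-$) be a sector with vertex $0$ containing the closed upper (resp. lower) half-plane minus $0$, whose closure avoids the opposite imaginary semiaxis $i\mathbb R_-$ (resp. $i\mathbb R_+$), with $S_-$ the complex conjugate of $S_+$. There are unique invertible matrix functions $H_\pm$ holomorphic on $S_\pm$, $C^\infty$ on $\overline{S_\pm}\setminus\{\infty\}$, with $H_\pm(0)=\mathrm{Id}$, such that $w=H_\pm(z)\tilde w$ transforms (L) into the diagonal system. The canonical fundamental matrices are $W_\pm=H_\pm F$, where the branch of $F$ on $S_-$ is the counterclockwise continuation of the branch on $S_+$; $W_{+,1}=H_+F$ with the branch of $F$ on $S_+$ obtained by continuing counterclockwise from $S_-$. Let $\Sigma_0$ (containing $\mathbb R_-$) and $\Sigma_1$ (containing $\mathbb R_+$) be the left and right components of $S_+\cap S_-$. The Stokes matrices are defined by $W_-=W_+C_0$ on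 $\Sigma_0$ and $W_{+,1}=W_-C_1$ on $\Sigma_1$; for $\mu>0$ they have the form $C_0=\begin{pmatrix}1&c_0\\0&1\end{pmatrix}$, $C_1=\begin{pmatrix}1&0\\c_1&1\end{pmatrix}$, and $c_0,c_1$ are the Stokes multipliers. *)

theory Defs
  imports "HOL-Analysis.Analysis"
begin

definition mat2 :: "complex \<Rightarrow> complex \<Rightarrow> complex \<Rightarrow> complex \<Rightarrow> complex^2^2" where
  "mat2 a b c d = (\<chi> i j. if i = 1 then (if j = 1 then a else b) else (if j = 1 then c else d))"

text \<open>Coefficient matrix of system (L):
  u' = z^-2 (-(l z + mu (1+z^2)) u + z/(2 i omega) v),  v' = 1/(2 i omega z) u.\<close>
definition sysL :: "real \<Rightarrow> int \<Rightarrow> real \<Rightarrow> complex \<Rightarrow> complex^2^2" where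
  "sysL \<omega> l \<mu> z = mat2
     ((-(of_int l * z + of_real \<mu> * (1 + z^2))) / z^2)  ((z / (2 * \<i> * of_real \<omega>)) / z^2)
     (1 / (2 * \<i> * of_real \<omega> * z))                        0"

text \<open>Coefficient matrix of the formal diagonal normal form at 0.\<close>
definition diagL :: "int \<Rightarrow> real \<Rightarrow> complex \<Rightarrow> complex^2^2" where
  "diagL l \<mu> z = mat2 ((-(of_int l * z + of_real \<mu> * (1 + z^2))) / z^2) 0 0 0"

text \<open>Fundamental matrix F(z) = diag(z^-l e^{mu(1/z - z)}, 1) of the diagonal system
  (single-valued, since l is an integer).\<close>
definition fundF :: "int \<Rightarrow> real \<Rightarrow> complex \<Rightarrow> complex^2^2" where
  "fundF l \<mu> z = mat2 (z powi (- l) * exp (of_real \<mu> * (1 / z - z))) 0 0 1"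

text \<open>The sector S_+ = {arg z in (-alpha, pi + alpha)}, 0 < alpha < pi/2: it contains the closed
  upper half-plane minus 0 and its closure avoids the negative imaginary semiaxis.\<close>
definition sectorP :: "real \<Rightarrow> complex set" where
  "sectorP \<alpha> = {z. \<exists>r t. 0 < r \<and> - \<alpha> < t \<and> t < pi + \<alpha> \<and> z = of_real r * cis t}"

definition sectorM :: "real \<Rightarrow> complex set" where
  "sectorM \<alpha> = cnj ` sectorP \<alpha>"

definition Sigma0 :: "real \<Rightarrow> complex set" where
  "Sigma0 \<alpha> = connected_component_set (sectorP \<alpha> \<inter> sectorM \<alpha>) (-1)"

definition Sigma1 :: "real \<Rightarrow> complex set" where
  "Sigma1 \<alpha> = connected_component_set (sectorP \<alpha> \<inter> sectorM \<alpha>) 1"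

text \<open>H is a normalizing transformation on the sector S: holomorphic (entrywise) on S,
  continuous on the closure of S with H(0) = Id, invertible on S, and w = H w~ transforms
  (L) into the diagonal system, i.e. H' = A H - H D on S.\<close>
definition normalizing :: "real \<Rightarrow> int \<Rightarrow> real \<Rightarrow> complex set \<Rightarrow> (complex \<Rightarrow> complex^2^2) \<Rightarrow> bool" where
  "normalizing \<omega> l \<mu> S H \<longleftrightarrow>
     (\<forall>i j. (\<lambda>z. H z $ i $ j) holomorphic_on S) \<and>
     continuous_on (closure S) H \<and>
     H 0 = mat 1 \<and>
     (\<forall>z\<in>S. invertible (H z)) \<and>
     (\<forall>z\<in>S. \<forall>i j. ((\<lambda>x. H x $ i $ j) has_field_derivative
          (sysL \<omega> l \<mu> z ** H z - H z ** diagL l \<mu> z) $ i $ j) (at z))"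

end

theory Submission
  imports Defs "HOL-Real_Asymp.Real_Asymp"
begin


definition fF :: "int \<Rightarrow> real \<Rightarrow> complex \<Rightarrow> complex" where
  "fF l \<mu> z = z powi (- l) * exp (of_real \<mu> * (1 / z - z))"
definition dd :: "int \<Rightarrow> real \<Rightarrow> complex \<Rightarrow> complex" where
  "dd l \<mu> z = (-(of_int l * z + of_real \<mu> * (1 + z^2))) / z^2"

lemma fF_nz: "z \<noteq> 0 \<Longrightarrow> fF l \<mu> z \<noteq> 0"
  by (simp add: fF_def)

lemma fF_deriv: assumes "z \<noteq> 0"
  shows "(fF l \<mu> has_field_derivative (dd l \<mu> z * fF l \<mu> z)) (at z)"
proof -
  have "(fF l \<mu> has_field_derivative
     (of_int (-l) * z powi (-l - 1) * 1) * exp (of_real \<mu> * (1 / z - z))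
     + z powi (- l) * (exp (of_real \<mu> * (1 / z - z)) * (of_real \<mu> * (- (1 / z^2) - 1)))) (at z)"
    unfolding fF_def using assms
    by (auto intro!: derivative_eq_intros simp: power2_eq_square field_simps)
  moreover have "z powi (-l - 1) = z powi (-l) / z" using assms
    by (simp add: power_int_diff)
  ultimately show ?thesis using assms
    apply (elim DERIV_cong)
    by (simp add: dd_def fF_def field_simps power2_eq_square)
qed

lemma lim_pos: assumes "\<mu> > 0" shows "((\<lambda>x. 1 / fF l \<mu> (of_real x)) \<longlongrightarrow> 0) (at_right 0)"
proof -
  have r: "((\<lambda>x::real. x powr (of_int l) * exp (- \<mu> * (1/x - x))) \<longlongrightarrow> 0) (at_right 0)"
    using assms by real_asymp
  have "eventually (\<lambda>x. x powr (of_int l) * exp (- \<mu> * (1/x - x)) = norm (1 / fF l \<mu> (of_real x))) (at_right (0::real))"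
    using eventually_at_right_less[of 0] 
  proof (rule eventually_mono)
    fix x :: real assume "0 < x"
    then show "x powr (of_int l) * exp (- \<mu> * (1/x - x)) = norm (1 / fF l \<mu> (of_real x))"
      apply (simp add: fF_def norm_divide norm_mult norm_power_int powr_real_of_int' power_int_minus
           exp_minus field_simps flip: of_real_diff of_real_divide of_real_mult)
      by (simp add: exp_add[symmetric] field_simps)
  qed
  then have "((\<lambda>x. norm (1 / fF l \<mu> (of_real x))) \<longlongrightarrow> 0) (at_right 0)"
    using r by (rule tendsto_cong[THEN iffD1])
  then show ?thesis by (simp add: tendsto_norm_zero_iff)
qed

lemma lim_neg: assumes "\<mu> > 0" shows "((\<lambda>x. fF l \<mu> (of_real (-x))) \<longlongrightarrow> 0) (at_right 0)"
proof -
  have r: "((\<lambda>x::real. x powr (- of_int l) * exp (\<mu> * (-1/x + x))) \<longlongrightarrow> 0) (at_right 0)"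
    using assms by real_asymp
  have "eventually (\<lambda>x. x powr (- of_int l) * exp (\<mu> * (-1/x + x)) = norm (fF l \<mu> (of_real (-x)))) (at_right (0::real))"
    using eventually_at_right_less[of 0] 
  proof (rule eventually_mono)
    fix x :: real assume "0 < x"
    then have e: "x powr (- of_int l) = x powi (-l)" using powr_real_of_int'[of x "-l"] by simp
    have e2: "exp (\<mu> * (-1/x + x)) = exp (- ((\<mu> - \<mu> * (x * x)) / x))"
      using \<open>0 < x\<close> by (simp add: field_simps)
    from \<open>0 < x\<close> show "x powr (- of_int l) * exp (\<mu> * (-1/x + x)) = norm (fF l \<mu> (of_real (-x)))"
      unfolding e e2
      by (simp add: fF_def norm_mult norm_power_int powr_real_of_int' 
           field_simps flip: of_real_diff of_real_divide of_real_mult of_real_minus)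
  qed
  then have "((\<lambda>x. norm (fF l \<mu> (of_real (-x)))) \<longlongrightarrow> 0) (at_right 0)"
    using r by (rule tendsto_cong[THEN iffD1])
  then show ?thesis by (simp add: tendsto_norm_zero_iff)
qed


definition kk :: "real \<Rightarrow> complex \<Rightarrow> complex" where
  "kk \<omega> z = 1 / (2 * \<i> * of_real \<omega> * z)"

definition col1 where "col1 \<omega> l \<mu> u v z \<longleftrightarrow>
   (u has_field_derivative kk \<omega> z * v z) (at z) \<and> (v has_field_derivative kk \<omega> z * u z - dd l \<mu> z * v z) (at z)"
definition col2 where "col2 \<omega> l \<mu> u v z \<longleftrightarrow>
   (u has_field_derivative dd l \<mu> z * u z + kk \<omega> z * v z) (at z) \<and> (v has_field_derivative kk \<omega> z * u z) (at z)"

lemma mat2_nth: "mat2 a b c d $ 1 $ 1 = a" "mat2 a b c d $ 1 $ 2 = b" "mat2 a b c d $ 2 $ 1 = c" "mat2 a b c d $ 2 $ 2 = d"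
  by (simp_all add: mat2_def)

lemma mult_nth: "((A::complex^2^2) ** B) $ i $ j = A$i$1 * B$1$j + A$i$2 * B$2$j"
  by (simp add: matrix_matrix_mult_def sum_2)

lemma normalizing_cols:
  assumes "normalizing \<omega> l \<mu> S H" "z \<in> S" "z \<noteq> 0"
  shows "col1 \<omega> l \<mu> (\<lambda>x. H x $ 1 $ 1) (\<lambda>x. H x $ 2 $ 1) z"
        "col2 \<omega> l \<mu> (\<lambda>x. H x $ 1 $ 2) (\<lambda>x. H x $ 2 $ 2) z"
proof -
  have D: "\<And>i j. ((\<lambda>x. H x $ i $ j) has_field_derivative
          (sysL \<omega> l \<mu> z ** H z - H z ** diagL l \<mu> z) $ i $ j) (at z)"
    using assms unfolding normalizing_def by blast
  note z = assms(3)
  show "col1 \<omega> l \<mu> (\<lambda>x. H x $ 1 $ 1) (\<lambda>x. H x $ 2 $ 1) z"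
    unfolding col1_def
    apply (intro conjI)
    apply (rule DERIV_cong[OF D[of 1 1]])
    using z apply (simp add: mult_nth mat2_nth sysL_def diagL_def kk_def dd_def field_simps power2_eq_square)
    apply (rule DERIV_cong[OF D[of 2 1]])
    using z by (simp add: mult_nth mat2_nth sysL_def diagL_def kk_def dd_def field_simps power2_eq_square)
  show "col2 \<omega> l \<mu> (\<lambda>x. H x $ 1 $ 2) (\<lambda>x. H x $ 2 $ 2) z"
    unfolding col2_def
    apply (intro conjI)
    apply (rule DERIV_cong[OF D[of 1 2]])
    using z apply (simp add: mult_nth mat2_nth sysL_def diagL_def kk_def dd_def field_simps power2_eq_square)
    apply (rule DERIV_cong[OF D[of 2 2]])
    using z by (simp add: mult_nth mat2_nth sysL_def diagL_def kk_def dd_def field_simps power2_eq_square)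
qed

lemma det_deriv: assumes "(u1 has_field_derivative a1) (at z)" "(u2 has_field_derivative a2) (at z)"
   "(v1 has_field_derivative b1) (at z)" "(v2 has_field_derivative b2) (at z)"
 shows "((\<lambda>x. u1 x * v2 x - u2 x * v1 x) has_field_derivative (a1 * v2 z + u1 z * b2) - (a2 * v1 z + u2 z * b1)) (at z)"
  by (rule DERIV_cong[OF DERIV_diff[OF DERIV_mult[OF assms(1,4)] DERIV_mult[OF assms(2,3)]]]) (simp add: algebra_simps)

lemma det22: assumes "col2 \<omega> l \<mu> u1 u2 z" "col2 \<omega> l \<mu> v1 v2 z"
  shows "((\<lambda>x. u1 x * v2 x - u2 x * v1 x) has_field_derivative dd l \<mu> z * (u1 z * v2 z - u2 z * v1 z)) (at z)"
proof -
  from assms have a: "(u1 has_field_derivative dd l \<mu> z * u1 z + kk \<omega> z * u2 z) (at z)" "(u2 has_field_derivative kk \<omega> z * u1 z) (at z)"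
     "(v1 has_field_derivative dd l \<mu> z * v1 z + kk \<omega> z * v2 z) (at z)" "(v2 has_field_derivative kk \<omega> z * v1 z) (at z)"
    unfolding col1_def col2_def by blast+
  show ?thesis by (rule DERIV_cong[OF det_deriv[OF a]]) (simp add: algebra_simps)
qed

lemma det12: assumes "col1 \<omega> l \<mu> u1 u2 z" "col2 \<omega> l \<mu> v1 v2 z"
  shows "((\<lambda>x. u1 x * v2 x - u2 x * v1 x) has_field_derivative 0) (at z)"
proof -
  from assms have a: "(u1 has_field_derivative kk \<omega> z * u2 z) (at z)" "(u2 has_field_derivative kk \<omega> z * u1 z - dd l \<mu> z * u2 z) (at z)"
     "(v1 has_field_derivative dd l \<mu> z * v1 z + kk \<omega> z * v2 z) (at z)" "(v2 has_field_derivative kk \<omega> z * v1 z) (at z)"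
    unfolding col1_def col2_def by blast+
  show ?thesis by (rule DERIV_cong[OF det_deriv[OF a]]) (simp add: algebra_simps)
qed

lemma det11: assumes "col1 \<omega> l \<mu> u1 u2 z" "col1 \<omega> l \<mu> v1 v2 z"
  shows "((\<lambda>x. u1 x * v2 x - u2 x * v1 x) has_field_derivative - dd l \<mu> z * (u1 z * v2 z - u2 z * v1 z)) (at z)"
proof -
  from assms have a: "(u1 has_field_derivative kk \<omega> z * u2 z) (at z)" "(u2 has_field_derivative kk \<omega> z * u1 z - dd l \<mu> z * u2 z) (at z)"
     "(v1 has_field_derivative kk \<omega> z * v2 z) (at z)" "(v2 has_field_derivative kk \<omega> z * v1 z - dd l \<mu> z * v2 z) (at z)"
    unfolding col1_def col2_def by blast+
  show ?thesis by (rule DERIV_cong[OF det_deriv[OF a]]) (simp add: algebra_simps)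
qed

lemma det22f: assumes "col2 \<omega> l \<mu> u1 u2 z" "col2 \<omega> l \<mu> v1 v2 z" "z \<noteq> 0"
  shows "((\<lambda>x. (u1 x * v2 x - u2 x * v1 x) / fF l \<mu> x) has_field_derivative 0) (at z)"
  apply (rule DERIV_cong[OF DERIV_divide[OF det22[OF assms(1,2)] fF_deriv[OF assms(3)] fF_nz[OF assms(3)]]])
  using fF_nz[OF assms(3)] by (simp add: field_simps power2_eq_square)

lemma det11f: assumes "col1 \<omega> l \<mu> u1 u2 z" "col1 \<omega> l \<mu> v1 v2 z" "z \<noteq> 0"
  shows "((\<lambda>x. (u1 x * v2 x - u2 x * v1 x) * fF l \<mu> x) has_field_derivative 0) (at z)"
  apply (rule DERIV_cong[OF DERIV_mult[OF det11[OF assms(1,2)] fF_deriv[OF assms(3)]]])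
  by (simp add: field_simps)

lemma kk_cnj: "cnj (kk \<omega> (cnj z)) = - kk \<omega> z"
  by (simp add: kk_def)
lemma dd_cnj: "cnj (dd l \<mu> (cnj z)) = dd l \<mu> z"
  by (simp add: dd_def)

lemma cnj_deriv: "(f has_field_derivative F) (at (cnj z)) \<Longrightarrow> ((\<lambda>x. cnj (f (cnj x))) has_field_derivative cnj F) (at z)"
  using has_field_derivative_cnj_cnj[of f F z] by (simp add: o_def)

lemma col1_refl: assumes "col1 \<omega> l \<mu> u v (cnj z)"
  shows "col1 \<omega> l \<mu> (\<lambda>x. cnj (u (cnj x))) (\<lambda>x. - cnj (v (cnj x))) z"
proof -
  have a: "((\<lambda>x. cnj (u (cnj x))) has_field_derivative cnj (kk \<omega> (cnj z) * v (cnj z))) (at z)"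
   and b: "((\<lambda>x. cnj (v (cnj x))) has_field_derivative cnj (kk \<omega> (cnj z) * u (cnj z) - dd l \<mu> (cnj z) * v (cnj z))) (at z)"
    using assms unfolding col1_def by (intro cnj_deriv; blast)+
  show ?thesis unfolding col1_def
    apply (intro conjI)
     apply (rule DERIV_cong[OF a]) apply (simp add: kk_cnj dd_cnj)
    apply (rule DERIV_cong[OF DERIV_minus[OF b]]) by (simp add: kk_cnj dd_cnj)
qed

lemma col2_refl: assumes "col2 \<omega> l \<mu> u v (cnj z)"
  shows "col2 \<omega> l \<mu> (\<lambda>x. - cnj (u (cnj x))) (\<lambda>x. cnj (v (cnj x))) z"
proof -
  have a: "((\<lambda>x. cnj (u (cnj x))) has_field_derivative cnj (dd l \<mu> (cnj z) * u (cnj z) + kk \<omega> (cnj z) * v (cnj z))) (at z)"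
   and b: "((\<lambda>x. cnj (v (cnj x))) has_field_derivative cnj (kk \<omega> (cnj z) * u (cnj z))) (at z)"
    using assms unfolding col2_def by (intro cnj_deriv; blast)+
  show ?thesis unfolding col2_def
    apply (intro conjI)
     apply (rule DERIV_cong[OF DERIV_minus[OF a]]) apply (simp add: kk_cnj dd_cnj)
    apply (rule DERIV_cong[OF b]) by (simp add: kk_cnj dd_cnj)
qed



lemma sectorP_mem: assumes "0 < \<alpha>" "z \<noteq> 0" "Im z \<ge> 0" shows "z \<in> sectorP \<alpha>"
proof -
  have "0 \<le> Arg z" using assms Arg_less_0 by blast
  moreover have "Arg z \<le> pi" by (rule Arg_le_pi)
  moreover have "z = of_real (norm z) * cis (Arg z)" using Arg_eq[OF assms(2)] by (simp add: cis_conv_exp)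
  ultimately show ?thesis unfolding sectorP_def using assms
    by (intro CollectI exI[of _ "norm z"] exI[of _ "Arg z"]) auto
qed

lemma sectorM_mem: assumes "0 < \<alpha>" "z \<noteq> 0" "Im z \<le> 0" shows "z \<in> sectorM \<alpha>"
proof -
  have "cnj z \<in> sectorP \<alpha>" using assms by (intro sectorP_mem) auto
  then show ?thesis unfolding sectorM_def by (metis complex_cnj_cnj image_eqI)
qed

lemma Sigma0_mem: assumes "0 < \<alpha>" "x < 0" shows "complex_of_real x \<in> Sigma0 \<alpha>"
proof -
  have "of_real ` {..<0} \<subseteq> connected_component_set (sectorP \<alpha> \<inter> sectorM \<alpha>) (-1)"
  proof (rule connected_component_maximal)
    show "-1 \<in> (of_real ` {..<0} :: complex set)" by (rule image_eqI[of _ _ "-1"]) auto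
    show "connected (of_real ` {..<0::real} :: complex set)"
      by (intro connected_continuous_image continuous_intros) auto
    show "(of_real ` {..<0} :: complex set) \<subseteq> sectorP \<alpha> \<inter> sectorM \<alpha>"
      using assms(1) by (auto intro!: sectorP_mem sectorM_mem)
  qed
  then show ?thesis using assms unfolding Sigma0_def by auto
qed

lemma Sigma1_mem: assumes "0 < \<alpha>" "x > 0" shows "complex_of_real x \<in> Sigma1 \<alpha>"
proof -
  have "of_real ` {0<..} \<subseteq> connected_component_set (sectorP \<alpha> \<inter> sectorM \<alpha>) 1"
  proof (rule connected_component_maximal)
    show "1 \<in> (of_real ` {0<..} :: complex set)" by (rule image_eqI[of _ _ "1"]) auto
    show "connected (of_real ` ({0<..} :: real set) :: complex set)"
      by (intro connected_continuous_image continuous_intros) auto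
    show "(of_real ` {0<..} :: complex set) \<subseteq> sectorP \<alpha> \<inter> sectorM \<alpha>"
      using assms(1) by (auto intro!: sectorP_mem sectorM_mem)
  qed
  then show ?thesis using assms unfolding Sigma1_def by auto
qed

lemma const_on_convex:
  fixes F :: "complex \<Rightarrow> complex"
  assumes "convex T" "\<And>z. z \<in> T \<Longrightarrow> (F has_field_derivative 0) (at z)" "a \<in> T" "z \<in> T"
  shows "F z = F a"
proof -
  obtain c where "\<forall>x\<in>T. F x = c"
    using has_field_derivative_zero_constant[OF assms(1)] assms(2)
    by (metis has_field_derivative_at_within)
  then show ?thesis using assms by auto
qed

lemma const_ray:
  fixes F :: "complex \<Rightarrow> complex"
  assumes "convex T" "\<And>z. z \<in> T \<Longrightarrow> (F has_field_derivative 0) (at z)"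
     "\<And>x. x > 0 \<Longrightarrow> complex_of_real (\<sigma> * x) \<in> T"
     "((\<lambda>x. F (of_real (\<sigma> * x))) \<longlongrightarrow> L) (at_right 0)" "z \<in> T"
  shows "F z = L"
proof -
  have "eventually (\<lambda>x. F z = F (of_real (\<sigma> * x))) (at_right (0::real))"
    using eventually_at_right_less[of 0]
    by (rule eventually_mono) (intro const_on_convex[OF assms(1,2)] assms(3,5))
  then have "((\<lambda>x. F z) \<longlongrightarrow> L) (at_right (0::real))"
    using assms(4) by (rule tendsto_cong[THEN iffD2])
  then show ?thesis by (subst (asm) tendsto_const_iff) auto
qed

lemma ray_lim:
  assumes "normalizing \<omega> l \<mu> S H" "\<bar>\<sigma>\<bar> = 1" "\<And>x. x > 0 \<Longrightarrow> complex_of_real (\<sigma> * x) \<in> S"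
  shows "((\<lambda>x. H (of_real (\<sigma> * x)) $ i $ j) \<longlongrightarrow> mat 1 $ i $ j) (at_right 0)"
proof -
  have c: "continuous_on (closure S) H" "H 0 = mat 1" using assms(1) unfolding normalizing_def by auto
  have "0 \<in> closure S" unfolding closure_approachable
  proof (intro allI impI)
    fix e :: real assume "e > 0"
    then show "\<exists>y\<in>S. dist y 0 < e" using assms(2) assms(3)[of "e/2"]
      by (intro bexI[of _ "of_real (\<sigma> * (e/2))"]) (auto simp: abs_mult norm_mult simp del: of_real_mult)
  qed
  then have "(H \<longlongrightarrow> H 0) (at 0 within closure S)" using c(1) unfolding continuous_on_def by blast
  moreover have "filterlim (\<lambda>x. complex_of_real (\<sigma> * x)) (at 0 within closure S) (at_right 0)"
    unfolding filterlim_at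
  proof
    show "\<forall>\<^sub>F x in at_right 0. complex_of_real (\<sigma> * x) \<in> closure S \<and> complex_of_real (\<sigma> * x) \<noteq> 0"
      using eventually_at_right_less[of 0]
      by (rule eventually_mono) (use assms(2,3) closure_subset in auto)
    have "((\<lambda>x. complex_of_real (\<sigma> * x)) \<longlongrightarrow> complex_of_real (\<sigma> * 0)) (at_right 0)"
      by (intro tendsto_intros)
    then show "((\<lambda>x. complex_of_real (\<sigma> * x)) \<longlongrightarrow> 0) (at_right 0)" by simp
  qed
  ultimately have "((\<lambda>x. H (complex_of_real (\<sigma> * x))) \<longlongrightarrow> H 0) (at_right 0)"
    by (rule filterlim_compose)
  then show ?thesis unfolding c(2) by (intro tendsto_vec_nth)
qed

definition "T1 = {z. Im z < 0 \<or> (Im z = 0 \<and> Re z > 0)}"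
definition "T2 = {z. Im z < 0 \<or> (Im z = 0 \<and> Re z < 0)}"

lemma convex_T1: "convex T1"
  unfolding convex_def T1_def
proof (intro ballI allI impI)
  fix x y :: complex and u v :: real
  assume x: "x \<in> {z. Im z < 0 \<or> Im z = 0 \<and> 0 < Re z}" and y: "y \<in> {z. Im z < 0 \<or> Im z = 0 \<and> 0 < Re z}"
    and uv: "0 \<le> u" "0 \<le> v" "u + v = 1"
  have i: "Im (u *\<^sub>R x + v *\<^sub>R y) = u * Im x + v * Im y" and r: "Re (u *\<^sub>R x + v *\<^sub>R y) = u * Re x + v * Re y" by auto
  show "u *\<^sub>R x + v *\<^sub>R y \<in> {z. Im z < 0 \<or> Im z = 0 \<and> 0 < Re z}"
  proof (cases "u = 0")
    case True then show ?thesis using y uv by auto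
  next
    case u: False
    show ?thesis
    proof (cases "v = 0")
      case True then show ?thesis using x uv by auto
    next
      case v: False
      have "u > 0" "v > 0" using u v uv by auto
      have a: "Im x \<le> 0" "Im y \<le> 0" using x y by auto
      have b: "u * Im x \<le> 0" "v * Im y \<le> 0" using a \<open>u>0\<close> \<open>v>0\<close>
        by (simp_all add: mult_nonneg_nonpos)
      show ?thesis
      proof (cases "Im x < 0 \<or> Im y < 0")
        case True
        then have "u * Im x < 0 \<or> v * Im y < 0" using \<open>u>0\<close> \<open>v>0\<close> by (auto simp: mult_pos_neg)
        then show ?thesis using b unfolding mem_Collect_eq i by linarith
      next
        case False
        then have "Im x = 0" "Im y = 0" "0 < Re x" "0 < Re y" using x y by auto
        moreover have "0 < u * Re x" "0 < v * Re y" using calculation \<open>u>0\<close> \<open>v>0\<close> by (auto simp: mult_pos_pos)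
        ultimately show ?thesis unfolding mem_Collect_eq i r by simp
      qed
    qed
  qed
qed

lemma convex_T2: "convex T2"
  unfolding convex_def T2_def
proof (intro ballI allI impI)
  fix x y :: complex and u v :: real
  assume x: "x \<in> {z. Im z < 0 \<or> Im z = 0 \<and> Re z < 0}" and y: "y \<in> {z. Im z < 0 \<or> Im z = 0 \<and> Re z < 0}"
    and uv: "0 \<le> u" "0 \<le> v" "u + v = 1"
  have i: "Im (u *\<^sub>R x + v *\<^sub>R y) = u * Im x + v * Im y" and r: "Re (u *\<^sub>R x + v *\<^sub>R y) = u * Re x + v * Re y" by auto
  show "u *\<^sub>R x + v *\<^sub>R y \<in> {z. Im z < 0 \<or> Im z = 0 \<and> Re z < 0}"
  proof (cases "u = 0")
    case True then show ?thesis using y uv by auto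
  next
    case u: False
    show ?thesis
    proof (cases "v = 0")
      case True then show ?thesis using x uv by auto
    next
      case v: False
      have "u > 0" "v > 0" using u v uv by auto
      have a: "Im x \<le> 0" "Im y \<le> 0" using x y by auto
      have b: "u * Im x \<le> 0" "v * Im y \<le> 0" using a \<open>u>0\<close> \<open>v>0\<close>
        by (simp_all add: mult_nonneg_nonpos)
      show ?thesis
      proof (cases "Im x < 0 \<or> Im y < 0")
        case True
        then have "u * Im x < 0 \<or> v * Im y < 0" using \<open>u>0\<close> \<open>v>0\<close> by (auto simp: mult_pos_neg)
        then show ?thesis using b unfolding mem_Collect_eq i by linarith
      next
        case False
        then have "Im x = 0" "Im y = 0" "Re x < 0" "Re y < 0" using x y by auto
        moreover have "u * Re x < 0" "v * Re y < 0" using calculation \<open>u>0\<close> \<open>v>0\<close> by (auto simp: mult_pos_neg)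
        ultimately show ?thesis unfolding mem_Collect_eq i r by simp
      qed
    qed
  qed
qed



lemma ray_lim_pos:
  assumes "normalizing \<omega> l \<mu> S H" "\<And>x. x > 0 \<Longrightarrow> complex_of_real x \<in> S"
  shows "((\<lambda>x. H (of_real x) $ i $ j) \<longlongrightarrow> mat 1 $ i $ j) (at_right 0)"
  using ray_lim[OF assms(1), of 1] assms(2) by simp

lemma ray_lim_neg:
  assumes "normalizing \<omega> l \<mu> S H" "\<And>x. x > 0 \<Longrightarrow> complex_of_real (-x) \<in> S"
  shows "((\<lambda>x. H (of_real (-x)) $ i $ j) \<longlongrightarrow> mat 1 $ i $ j) (at_right 0)"
  using ray_lim[OF assms(1), of "-1"] assms(2) by simp

lemma mi_T: "- \<i> \<in> T1" "- \<i> \<in> T2" by (auto simp: T1_def T2_def)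
lemma pos_T1: "x > 0 \<Longrightarrow> complex_of_real x \<in> T1" by (auto simp: T1_def)
lemma neg_T2: "x > 0 \<Longrightarrow> complex_of_real (-x) \<in> T2" by (auto simp: T2_def)

lemma const_T12_pos:
  fixes F :: "complex \<Rightarrow> complex"
  assumes "\<And>z. z \<in> T1 \<union> T2 \<Longrightarrow> (F has_field_derivative 0) (at z)"
    "((\<lambda>x. F (of_real x)) \<longlongrightarrow> L) (at_right 0)" "z \<in> T1 \<union> T2"
  shows "F z = L"
proof -
  have 1: "\<And>w. w \<in> T1 \<Longrightarrow> F w = L"
    by (rule const_ray[OF convex_T1, of F 1]) (use assms pos_T1 in auto)
  have "\<And>w. w \<in> T2 \<Longrightarrow> F w = F (- \<i>)"
    by (rule const_on_convex[OF convex_T2]) (use assms mi_T in auto)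
  then show ?thesis using 1 mi_T assms(3) by auto
qed

lemma const_T12_neg:
  fixes F :: "complex \<Rightarrow> complex"
  assumes "\<And>z. z \<in> T1 \<union> T2 \<Longrightarrow> (F has_field_derivative 0) (at z)"
    "((\<lambda>x. F (of_real (-x))) \<longlongrightarrow> L) (at_right 0)" "z \<in> T1 \<union> T2"
  shows "F z = L"
proof -
  have 1: "\<And>w. w \<in> T2 \<Longrightarrow> F w = L"
    by (rule const_ray[OF convex_T2, of F "-1"]) (use assms neg_T2 in auto)
  have "\<And>w. w \<in> T1 \<Longrightarrow> F w = F (- \<i>)"
    by (rule const_on_convex[OF convex_T1]) (use assms mi_T in auto)
  then show ?thesis using 1 mi_T assms(3) by auto
qed

lemma T12_props: "z \<in> T1 \<union> T2 \<Longrightarrow> z \<noteq> 0 \<and> Im z \<le> 0"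
  by (auto simp: T1_def T2_def)

lemma reflect_unique:
  assumes "0 < \<alpha>" "\<mu> > 0"
    and hp: "normalizing \<omega> l \<mu> (sectorP \<alpha>) Hp"
    and hm: "normalizing \<omega> l \<mu> (sectorM \<alpha>) Hm"
    and z: "z \<in> T1 \<union> T2"
  shows "Hm z $ 1 $ 1 = cnj (Hp (cnj z) $ 1 $ 1) \<and> Hm z $ 1 $ 2 = - cnj (Hp (cnj z) $ 1 $ 2)
       \<and> Hm z $ 2 $ 1 = - cnj (Hp (cnj z) $ 2 $ 1) \<and> Hm z $ 2 $ 2 = cnj (Hp (cnj z) $ 2 $ 2)"
proof -
  define p where "p x = Hm x $ 1 $ 1" for x
  define q where "q x = Hm x $ 1 $ 2" for x
  define r where "r x = Hm x $ 2 $ 1" for x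
  define s where "s x = Hm x $ 2 $ 2" for x
  define g11 where "g11 x = cnj (Hp (cnj x) $ 1 $ 1)" for x
  define g12 where "g12 x = - cnj (Hp (cnj x) $ 1 $ 2)" for x
  define g21 where "g21 x = - cnj (Hp (cnj x) $ 2 $ 1)" for x
  define g22 where "g22 x = cnj (Hp (cnj x) $ 2 $ 2)" for x
  have memM: "w \<in> sectorM \<alpha>" and memP: "cnj w \<in> sectorP \<alpha>" and nz: "w \<noteq> 0" "cnj w \<noteq> 0"
    if "w \<in> T1 \<union> T2" for w
    using T12_props[OF that] assms(1) by (auto intro!: sectorM_mem sectorP_mem)
  have cM1: "col1 \<omega> l \<mu> p r w" and cM2: "col2 \<omega> l \<mu> q s w" if "w \<in> T1 \<union> T2" for w
    unfolding p_def q_def r_def s_def using normalizing_cols[OF hm memM[OF that] nz(1)[OF that]] by auto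
  have cG1: "col1 \<omega> l \<mu> g11 g21 w" and cG2: "col2 \<omega> l \<mu> g12 g22 w" if "w \<in> T1 \<union> T2" for w
  proof -
    note c = normalizing_cols[OF hp memP[OF that] nz(2)[OF that]]
    show "col1 \<omega> l \<mu> g11 g21 w" unfolding g11_def[abs_def] g21_def[abs_def] using col1_refl[OF c(1)] by simp
    show "col2 \<omega> l \<mu> g12 g22 w" unfolding g12_def[abs_def] g22_def[abs_def] using col2_refl[OF c(2)] by simp
  qed
  have Sp: "complex_of_real x \<in> sectorP \<alpha>" "complex_of_real x \<in> sectorM \<alpha>"
     "complex_of_real (-x) \<in> sectorP \<alpha>" "complex_of_real (-x) \<in> sectorM \<alpha>" if "x > 0" for x
    using that assms(1) by (auto intro!: sectorM_mem sectorP_mem)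
  note LHp = ray_lim_pos[OF hp Sp(1)] and LHm = ray_lim_pos[OF hm Sp(2)]
    and NHp = ray_lim_neg[OF hp Sp(3)] and NHm = ray_lim_neg[OF hm Sp(4)]
  have mat1: "(mat 1 :: complex^2^2) $ 1 $ 1 = 1" "(mat 1 :: complex^2^2) $ 1 $ 2 = 0" "(mat 1 :: complex^2^2) $ 2 $ 1 = 0"
     "(mat 1 :: complex^2^2) $ 2 $ 2 = 1" by (simp_all add: mat_def)
  have lp: "((\<lambda>x. p (of_real x)) \<longlongrightarrow> 1) (at_right 0)" "((\<lambda>x. q (of_real x)) \<longlongrightarrow> 0) (at_right 0)"
     "((\<lambda>x. r (of_real x)) \<longlongrightarrow> 0) (at_right 0)" "((\<lambda>x. s (of_real x)) \<longlongrightarrow> 1) (at_right 0)"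
    unfolding p_def q_def r_def s_def using LHm[of 1 1] LHm[of 1 2] LHm[of 2 1] LHm[of 2 2] by (simp_all add: mat1)
  have ln: "((\<lambda>x. p (of_real (-x))) \<longlongrightarrow> 1) (at_right 0)" "((\<lambda>x. q (of_real (-x))) \<longlongrightarrow> 0) (at_right 0)"
     "((\<lambda>x. r (of_real (-x))) \<longlongrightarrow> 0) (at_right 0)" "((\<lambda>x. s (of_real (-x))) \<longlongrightarrow> 1) (at_right 0)"
    unfolding p_def q_def r_def s_def using NHm[of 1 1] NHm[of 1 2] NHm[of 2 1] NHm[of 2 2] by (simp_all add: mat1)
  have gp: "((\<lambda>x. g11 (of_real x)) \<longlongrightarrow> 1) (at_right 0)" "((\<lambda>x. g12 (of_real x)) \<longlongrightarrow> 0) (at_right 0)"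
     "((\<lambda>x. g21 (of_real x)) \<longlongrightarrow> 0) (at_right 0)" "((\<lambda>x. g22 (of_real x)) \<longlongrightarrow> 1) (at_right 0)"
    unfolding g11_def g12_def g21_def g22_def
    using tendsto_cnj[OF LHp[of 1 1]] tendsto_minus[OF tendsto_cnj[OF LHp[of 1 2]]]
      tendsto_minus[OF tendsto_cnj[OF LHp[of 2 1]]] tendsto_cnj[OF LHp[of 2 2]] by (simp_all add: mat1)
  have gn: "((\<lambda>x. g11 (of_real (-x))) \<longlongrightarrow> 1) (at_right 0)" "((\<lambda>x. g12 (of_real (-x))) \<longlongrightarrow> 0) (at_right 0)"
     "((\<lambda>x. g21 (of_real (-x))) \<longlongrightarrow> 0) (at_right 0)" "((\<lambda>x. g22 (of_real (-x))) \<longlongrightarrow> 1) (at_right 0)"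
    unfolding g11_def g12_def g21_def g22_def
    using tendsto_cnj[OF NHp[of 1 1]] tendsto_minus[OF tendsto_cnj[OF NHp[of 1 2]]]
      tendsto_minus[OF tendsto_cnj[OF NHp[of 2 1]]] tendsto_cnj[OF NHp[of 2 2]] by (simp_all add: mat1)
  have W22: "(g12 w * s w - g22 w * q w) / fF l \<mu> w = 0" if "w \<in> T1 \<union> T2" for w
  proof (rule const_T12_pos[where F = "\<lambda>w. (g12 w * s w - g22 w * q w) / fF l \<mu> w"])
    show "((\<lambda>w. (g12 w * s w - g22 w * q w) / fF l \<mu> w) has_field_derivative 0) (at z)" if "z \<in> T1 \<union> T2" for z
      by (rule det22f[OF cG2 cM2]) (use that nz in auto)
    have "((\<lambda>x. (g12 (of_real x) * s (of_real x) - g22 (of_real x) * q (of_real x)) * (1 / fF l \<mu> (of_real x)))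
       \<longlongrightarrow> (0 * 1 - 1 * 0) * 0) (at_right 0)"
      by (intro tendsto_intros gp lp lim_pos assms(2))
    then show "((\<lambda>x. (g12 (of_real x) * s (of_real x) - g22 (of_real x) * q (of_real x)) / fF l \<mu> (of_real x))
       \<longlongrightarrow> 0) (at_right 0)" by simp
  qed (fact that)
  have W11: "(g11 w * r w - g21 w * p w) * fF l \<mu> w = 0" if "w \<in> T1 \<union> T2" for w
  proof (rule const_T12_neg[where F = "\<lambda>w. (g11 w * r w - g21 w * p w) * fF l \<mu> w"])
    show "((\<lambda>w. (g11 w * r w - g21 w * p w) * fF l \<mu> w) has_field_derivative 0) (at z)" if "z \<in> T1 \<union> T2" for z
      by (rule det11f[OF cG1 cM1]) (use that nz in auto)
    have "((\<lambda>x. (g11 (of_real (-x)) * r (of_real (-x)) - g21 (of_real (-x)) * p (of_real (-x))) * fF l \<mu> (of_real (-x)))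
       \<longlongrightarrow> (1 * 0 - 0 * 1) * 0) (at_right 0)"
      by (intro tendsto_intros gn ln lim_neg assms(2))
    then show "((\<lambda>x. (g11 (of_real (-x)) * r (of_real (-x)) - g21 (of_real (-x)) * p (of_real (-x))) * fF l \<mu> (of_real (-x)))
       \<longlongrightarrow> 0) (at_right 0)" by simp
  qed (fact that)
  have W12: "g11 w * s w - g21 w * q w = 1" if "w \<in> T1 \<union> T2" for w
  proof (rule const_T12_pos[where F = "\<lambda>w. g11 w * s w - g21 w * q w"])
    show "((\<lambda>w. g11 w * s w - g21 w * q w) has_field_derivative 0) (at z)" if "z \<in> T1 \<union> T2" for z
      by (rule det12[OF cG1 cM2]) (use that in auto)
    have "((\<lambda>x. g11 (of_real x) * s (of_real x) - g21 (of_real x) * q (of_real x)) \<longlongrightarrow> 1 * 1 - 0 * 0) (at_right 0)"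
      by (intro tendsto_intros gp lp)
    then show "((\<lambda>x. g11 (of_real x) * s (of_real x) - g21 (of_real x) * q (of_real x)) \<longlongrightarrow> 1) (at_right 0)" by simp
  qed (fact that)
  have W21: "p w * g22 w - r w * g12 w = 1" if "w \<in> T1 \<union> T2" for w
  proof (rule const_T12_pos[where F = "\<lambda>w. p w * g22 w - r w * g12 w"])
    show "((\<lambda>w. p w * g22 w - r w * g12 w) has_field_derivative 0) (at z)" if "z \<in> T1 \<union> T2" for z
      by (rule det12[OF cM1 cG2]) (use that in auto)
    have "((\<lambda>x. p (of_real x) * g22 (of_real x) - r (of_real x) * g12 (of_real x)) \<longlongrightarrow> 1 * 1 - 0 * 0) (at_right 0)"
      by (intro tendsto_intros gp lp)
    then show "((\<lambda>x. p (of_real x) * g22 (of_real x) - r (of_real x) * g12 (of_real x)) \<longlongrightarrow> 1) (at_right 0)" by simp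
  qed (fact that)
  have Wm: "p w * s w - r w * q w = 1" if "w \<in> T1 \<union> T2" for w
  proof (rule const_T12_pos[where F = "\<lambda>w. p w * s w - r w * q w"])
    show "((\<lambda>w. p w * s w - r w * q w) has_field_derivative 0) (at z)" if "z \<in> T1 \<union> T2" for z
      by (rule det12[OF cM1 cM2]) (use that in auto)
    have "((\<lambda>x. p (of_real x) * s (of_real x) - r (of_real x) * q (of_real x)) \<longlongrightarrow> 1 * 1 - 0 * 0) (at_right 0)"
      by (intro tendsto_intros lp)
    then show "((\<lambda>x. p (of_real x) * s (of_real x) - r (of_real x) * q (of_real x)) \<longlongrightarrow> 1) (at_right 0)" by simp
  qed (fact that)
  have w22: "g12 z * s z - g22 z * q z = 0" using W22[OF z] fF_nz[OF nz(1)[OF z]] by simp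
  have w11: "g11 z * r z - g21 z * p z = 0" using W11[OF z] fF_nz[OF nz(1)[OF z]] by simp
  note w12 = W12[OF z] and w21 = W21[OF z] and wm = Wm[OF z]
  have e1: "g11 z * (p z * s z - r z * q z) = (g11 z * s z - g21 z * q z) * p z - (g11 z * r z - g21 z * p z) * q z"
    by (simp add: algebra_simps)
  have e2: "g21 z * (p z * s z - r z * q z) = (g11 z * s z - g21 z * q z) * r z - (g11 z * r z - g21 z * p z) * s z"
    by (simp add: algebra_simps)
  have e3: "g12 z * (p z * s z - r z * q z) = (g12 z * s z - g22 z * q z) * p z + (p z * g22 z - r z * g12 z) * q z"
    by (simp add: algebra_simps)
  have e4: "g22 z * (p z * s z - r z * q z) = (g12 z * s z - g22 z * q z) * r z + (p z * g22 z - r z * g12 z) * s z"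
    by (simp add: algebra_simps)
  have "g11 z = p z" "g21 z = r z" "g12 z = q z" "g22 z = s z"
    using e1 e2 e3 e4 unfolding w22 w11 w12 w21 wm by simp_all
  then show ?thesis unfolding p_def q_def r_def s_def g11_def g12_def g21_def g22_def by auto
qed



lemma lim_eq:
  fixes f g :: "real \<Rightarrow> complex"
  assumes "\<And>x. x > 0 \<Longrightarrow> f x = g x" "(f \<longlongrightarrow> a) (at_right 0)" "(g \<longlongrightarrow> b) (at_right 0)"
  shows "a = b"
proof -
  have "eventually (\<lambda>x. f x = g x) (at_right (0::real))"
    using eventually_at_right_less[of 0] by (rule eventually_mono) (use assms in auto)
  then have "(g \<longlongrightarrow> a) (at_right 0)" using assms(2) by (rule tendsto_cong[THEN iffD1])
  then show ?thesis using assms(3) tendsto_unique trivial_limit_at_right_real by blast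
qed

lemma fund_nth: "((H::complex^2^2) ** fundF l \<mu> z) $ i $ 1 = H $ i $ 1 * fF l \<mu> z"
   "((H::complex^2^2) ** fundF l \<mu> z) $ i $ 2 = H $ i $ 2"
   "(((H::complex^2^2) ** fundF l \<mu> z) ** C) $ i $ j = H $ i $ 1 * fF l \<mu> z * C $ 1 $ j + H $ i $ 2 * C $ 2 $ j"
  by (simp_all add: mult_nth fundF_def fF_def mat2_nth)

lemma fF_real: "cnj (fF l \<mu> (of_real y)) = fF l \<mu> (of_real y)"
proof -
  have e: "complex_of_real \<mu> * (1 / of_real y - of_real y) = of_real (\<mu> * (1/y - y))" by simp
  show ?thesis
    unfolding fF_def e exp_of_real of_real_power_int[symmetric] of_real_mult[symmetric] by (rule complex_cnj_complex_of_real)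
qed

theorem mainTheorem3:
  fixes \<omega> \<mu> \<alpha> :: real and l :: int
    and Hp Hm :: "complex \<Rightarrow> complex^2^2" and C0 C1 :: "complex^2^2"
  assumes "\<omega> > 0" and "\<mu> > 0"
    and "0 < \<alpha>" and "\<alpha> < pi / 2"
    and "normalizing \<omega> l \<mu> (sectorP \<alpha>) Hp"
    and "normalizing \<omega> l \<mu> (sectorM \<alpha>) Hm"
    and "\<forall>z\<in>Sigma0 \<alpha>. Hm z ** fundF l \<mu> z = (Hp z ** fundF l \<mu> z) ** C0"
    and "\<forall>z\<in>Sigma1 \<alpha>. Hp z ** fundF l \<mu> z = (Hm z ** fundF l \<mu> z) ** C1"
  shows "C0 $ 1 $ 2 \<in> \<real> \<and> C1 $ 2 $ 1 \<in> \<real>"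
proof -
  note hp = assms(5) and hm = assms(6)
  have Sp: "complex_of_real x \<in> sectorP \<alpha>" "complex_of_real (-x) \<in> sectorP \<alpha>" if "x > 0" for x
    using that assms(3) by (auto intro!: sectorP_mem)
  have mat1: "(mat 1 :: complex^2^2) $ 1 $ 1 = 1" "(mat 1 :: complex^2^2) $ 1 $ 2 = 0" "(mat 1 :: complex^2^2) $ 2 $ 1 = 0"
     "(mat 1 :: complex^2^2) $ 2 $ 2 = 1" by (simp_all add: mat_def)
  have ev: "eventually (\<lambda>x. x > 0 \<and> h x \<noteq> 0) (at_right (0::real))" if "(h \<longlongrightarrow> 1) (at_right 0)" for h :: "real \<Rightarrow> complex"
    using eventually_conj[OF eventually_at_right_less[of 0] tendsto_imp_eventually_ne[OF that, of 0]] by simp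
  have exw: "\<exists>x. x > 0 \<and> h x \<noteq> 0" if "(h \<longlongrightarrow> 1) (at_right 0)" for h :: "real \<Rightarrow> complex"
    using eventually_happens[OF ev[OF that]] trivial_limit_at_right_real by blast
  have part0: "C0 $ 1 $ 2 \<in> \<real>"
  proof -
    define P where "P x = Hp (of_real (-x)) $ 1 $ 1" for x
    define Q where "Q x = Hp (of_real (-x)) $ 1 $ 2" for x
    define R where "R x = Hp (of_real (-x)) $ 2 $ 1" for x
    define S where "S x = Hp (of_real (-x)) $ 2 $ 2" for x
    define f where "f x = fF l \<mu> (of_real (-x))" for x
    define a where "a = C0 $ 1 $ 1"
    define b where "b = C0 $ 1 $ 2"
    define c where "c = C0 $ 2 $ 1"
    define d where "d = C0 $ 2 $ 2"
    have E: "cnj (P x) * f x = P x * f x * a + Q x * c \<and> - cnj (R x) * f x = R x * f x * a + S x * c \<and>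
       - cnj (Q x) = P x * f x * b + Q x * d \<and> cnj (S x) = R x * f x * b + S x * d" if "x > 0" for x
    proof -
      let ?z = "complex_of_real (-x)"
      have zS: "?z \<in> Sigma0 \<alpha>" using Sigma0_mem[OF assms(3), of "-x"] that by simp
      have zT: "?z \<in> T1 \<union> T2" using neg_T2[OF that] by blast
      have M: "Hm ?z ** fundF l \<mu> ?z = (Hp ?z ** fundF l \<mu> ?z) ** C0" using assms(7) zS by blast
      have R: "Hm ?z $ 1 $ 1 = cnj (P x)" "Hm ?z $ 1 $ 2 = - cnj (Q x)" "Hm ?z $ 2 $ 1 = - cnj (R x)"
        "Hm ?z $ 2 $ 2 = cnj (S x)"
        using reflect_unique[OF assms(3,2) hp hm zT] unfolding P_def Q_def R_def S_def by simp_all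
      have "\<And>i j. (Hm ?z ** fundF l \<mu> ?z) $ i $ j = ((Hp ?z ** fundF l \<mu> ?z) ** C0) $ i $ j" using M by simp
      from this[of 1 1] this[of 2 1] this[of 1 2] this[of 2 2] show ?thesis
        unfolding fund_nth R unfolding P_def Q_def R_def S_def f_def a_def b_def c_def d_def by simp
    qed
    have fnz: "f x \<noteq> 0" if "x > 0" for x using that unfolding f_def by (intro fF_nz) simp
    have lP: "(P \<longlongrightarrow> 1) (at_right 0)" "(Q \<longlongrightarrow> 0) (at_right 0)" "(R \<longlongrightarrow> 0) (at_right 0)" "(S \<longlongrightarrow> 1) (at_right 0)"
      unfolding P_def[abs_def] Q_def[abs_def] R_def[abs_def] S_def[abs_def]
      using ray_lim_neg[OF hp Sp(2), of 1 1] ray_lim_neg[OF hp Sp(2), of 1 2]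
        ray_lim_neg[OF hp Sp(2), of 2 1] ray_lim_neg[OF hp Sp(2), of 2 2] by (simp_all add: mat1)
    have lf: "(f \<longlongrightarrow> 0) (at_right 0)" unfolding f_def[abs_def] by (rule lim_neg[OF assms(2)])
    have c0: "c = 0"
    proof (rule lim_eq[of "\<lambda>x. S x * c" "\<lambda>x. - cnj (R x) * f x - R x * f x * a"])
      show "S x * c = - cnj (R x) * f x - R x * f x * a" if "x > 0" for x using E[OF that] by (simp add: algebra_simps)
      show "((\<lambda>x. S x * c) \<longlongrightarrow> c) (at_right 0)" using tendsto_mult[OF lP(4) tendsto_const[of c]] by simp
      show "((\<lambda>x. - cnj (R x) * f x - R x * f x * a) \<longlongrightarrow> 0) (at_right 0)"
        using tendsto_intros(1-100) lP lf by (auto intro!: tendsto_eq_intros)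
    qed
    have e1: "cnj (P x) = P x * a" if "x > 0" for x using E[OF that] fnz[OF that] c0 by (simp add: algebra_simps)
    have a1: "1 = a"
    proof (rule lim_eq[OF e1])
      show "((\<lambda>x. cnj (P x)) \<longlongrightarrow> 1) (at_right 0)" using tendsto_cnj[OF lP(1)] by simp
      show "((\<lambda>x. P x * a) \<longlongrightarrow> a) (at_right 0)" using tendsto_mult[OF lP(1) tendsto_const[of a]] by simp
    qed
    have d1: "1 = d"
    proof (rule lim_eq[of "\<lambda>x. cnj (S x)" "\<lambda>x. R x * f x * b + S x * d"])
      show "cnj (S x) = R x * f x * b + S x * d" if "x > 0" for x using E[OF that] by simp
      show "((\<lambda>x. cnj (S x)) \<longlongrightarrow> 1) (at_right 0)" using tendsto_cnj[OF lP(4)] by simp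
      have "((\<lambda>x. R x * f x * b + S x * d) \<longlongrightarrow> 0 * 0 * b + 1 * d) (at_right 0)"
        by (intro tendsto_intros lP lf)
      then show "((\<lambda>x. R x * f x * b + S x * d) \<longlongrightarrow> d) (at_right 0)" by simp
    qed
    obtain x where x: "x > 0" "P x \<noteq> 0" using exw[OF lP(1)] by blast
    have Pr: "cnj (P x) = P x" using e1[OF x(1)] a1 by simp
    have fr: "cnj (f x) = f x" unfolding f_def by (rule fF_real)
    have "- cnj (Q x) = P x * f x * b + Q x" using E[OF x(1)] d1 by simp
    then have bq: "b = - (cnj (Q x) + Q x) / (P x * f x)" using x(2) fnz[OF x(1)] by (simp add: field_simps)
    have "cnj b = b" unfolding bq using Pr fr by (simp add: algebra_simps)
    then show ?thesis unfolding b_def[symmetric] using Reals_cnj_iff by blast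
  qed
  have part1: "C1 $ 2 $ 1 \<in> \<real>"
  proof -
    define P where "P x = Hp (of_real x) $ 1 $ 1" for x
    define Q where "Q x = Hp (of_real x) $ 1 $ 2" for x
    define R where "R x = Hp (of_real x) $ 2 $ 1" for x
    define S where "S x = Hp (of_real x) $ 2 $ 2" for x
    define f where "f x = fF l \<mu> (of_real x)" for x
    define a where "a = C1 $ 1 $ 1"
    define b where "b = C1 $ 1 $ 2"
    define c where "c = C1 $ 2 $ 1"
    define d where "d = C1 $ 2 $ 2"
    have E: "P x * f x = cnj (P x) * f x * a - cnj (Q x) * c \<and> R x * f x = - cnj (R x) * f x * a + cnj (S x) * c \<and>
       Q x = cnj (P x) * f x * b - cnj (Q x) * d \<and> S x = - cnj (R x) * f x * b + cnj (S x) * d" if "x > 0" for x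
    proof -
      let ?z = "complex_of_real x"
      have zS: "?z \<in> Sigma1 \<alpha>" using Sigma1_mem[OF assms(3), of "x"] that by simp
      have zT: "?z \<in> T1 \<union> T2" using pos_T1[OF that] by blast
      have M: "Hp ?z ** fundF l \<mu> ?z = (Hm ?z ** fundF l \<mu> ?z) ** C1" using assms(8) zS by blast
      have R: "Hm ?z $ 1 $ 1 = cnj (P x)" "Hm ?z $ 1 $ 2 = - cnj (Q x)" "Hm ?z $ 2 $ 1 = - cnj (R x)"
        "Hm ?z $ 2 $ 2 = cnj (S x)"
        using reflect_unique[OF assms(3,2) hp hm zT] unfolding P_def Q_def R_def S_def by simp_all
      have "\<And>i j. (Hp ?z ** fundF l \<mu> ?z) $ i $ j = ((Hm ?z ** fundF l \<mu> ?z) ** C1) $ i $ j" using M by simp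
      from this[of 1 1] this[of 2 1] this[of 1 2] this[of 2 2] show ?thesis
        unfolding fund_nth R unfolding P_def Q_def R_def S_def f_def a_def b_def c_def d_def by simp
    qed
    have fnz: "f x \<noteq> 0" if "x > 0" for x using that unfolding f_def by (intro fF_nz) simp
    have lP: "(P \<longlongrightarrow> 1) (at_right 0)" "(Q \<longlongrightarrow> 0) (at_right 0)" "(R \<longlongrightarrow> 0) (at_right 0)" "(S \<longlongrightarrow> 1) (at_right 0)"
      unfolding P_def[abs_def] Q_def[abs_def] R_def[abs_def] S_def[abs_def]
      using ray_lim_pos[OF hp Sp(1), of 1 1] ray_lim_pos[OF hp Sp(1), of 1 2]
        ray_lim_pos[OF hp Sp(1), of 2 1] ray_lim_pos[OF hp Sp(1), of 2 2] by (simp_all add: mat1)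
    have lg: "((\<lambda>x. 1 / f x) \<longlongrightarrow> 0) (at_right 0)" unfolding f_def by (rule lim_pos[OF assms(2)])
    have b0: "b = 0"
    proof (rule lim_eq[of "\<lambda>x. cnj (P x) * b" "\<lambda>x. (Q x + cnj (Q x) * d) * (1 / f x)"])
      show "cnj (P x) * b = (Q x + cnj (Q x) * d) * (1 / f x)" if "x > 0" for x
        using E[OF that] fnz[OF that] by (simp add: field_simps)
      show "((\<lambda>x. cnj (P x) * b) \<longlongrightarrow> b) (at_right 0)" using tendsto_mult[OF tendsto_cnj[OF lP(1)] tendsto_const[of b]] by simp
      have "((\<lambda>x. (Q x + cnj (Q x) * d) * (1 / f x)) \<longlongrightarrow> (0 + cnj 0 * d) * 0) (at_right 0)"
        by (intro tendsto_intros lP lg)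
      then show "((\<lambda>x. (Q x + cnj (Q x) * d) * (1 / f x)) \<longlongrightarrow> 0) (at_right 0)" by simp
    qed
    have a1: "1 = a"
    proof (rule lim_eq[of "\<lambda>x. P x" "\<lambda>x. cnj (P x) * a - cnj (Q x) * c * (1 / f x)"])
      show "P x = cnj (P x) * a - cnj (Q x) * c * (1 / f x)" if "x > 0" for x
        using E[OF that] fnz[OF that] by (simp add: field_simps)
      show "((\<lambda>x. P x) \<longlongrightarrow> 1) (at_right 0)" using lP(1) by simp
      have "((\<lambda>x. cnj (P x) * a - cnj (Q x) * c * (1 / f x)) \<longlongrightarrow> cnj 1 * a - cnj 0 * c * 0) (at_right 0)"
        by (intro tendsto_intros lP lg)
      then show "((\<lambda>x. cnj (P x) * a - cnj (Q x) * c * (1 / f x)) \<longlongrightarrow> a) (at_right 0)" by simp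
    qed
    have e4: "S x = cnj (S x) * d" if "x > 0" for x using E[OF that] b0 by simp
    have d1: "1 = d"
    proof (rule lim_eq[OF e4])
      show "(S \<longlongrightarrow> 1) (at_right 0)" by (rule lP(4))
      show "((\<lambda>x. cnj (S x) * d) \<longlongrightarrow> d) (at_right 0)" using tendsto_mult[OF tendsto_cnj[OF lP(4)] tendsto_const[of d]] by simp
    qed
    obtain x where x: "x > 0" "S x \<noteq> 0" using exw[OF lP(4)] by blast
    have Sr: "cnj (S x) = S x" using e4[OF x(1)] d1 by simp
    have fr: "cnj (f x) = f x" unfolding f_def by (rule fF_real)
    have "R x * f x = - cnj (R x) * f x + cnj (S x) * c" using E[OF x(1)] a1 by simp
    then have cq: "c = (R x + cnj (R x)) * f x / S x" using x(2) Sr by (simp add: field_simps)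
    have "cnj c = c" unfolding cq using Sr fr by (simp add: algebra_simps)
    then show ?thesis unfolding c_def[symmetric] using Reals_cnj_iff by blast
  qed
  show ?thesis using part0 part1 by blast
qed

end
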